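(* Let $\vartheta\in\{p,bp,r\}$. The inclusion $\int\mathcal{L}_u\subset\mathcal{H}_{\vartheta}$ holds and is strict.
   Context: $\Omega$ denotes the set of all complex double sequences $x=(x_{kl})_{k,l\ge 1}$. A double sequence is $p$-convergent (Pringsheim convergent) to $L$ if for every $\varepsilon>0$ there is $N$ with $|x_{kl}-L|<\varepsilon$ for all $k,l\ge N$; $bp$-convergent if bounded and $p$-convergent; $r$-convergent (regularly convergent) if $p$-convergent and every row and every column converges. For $\vartheta\in\{p,bp,r\}$, $\mathcal{C}_{\vartheta 0}$ is the set of double sequences $\vartheta$-convergent to $0$. $\Delta x_{kl}=x_{kl}-x_{k+1,l}-x_{k,l+1}+x_{k+1,l+1}$, and $\mathcal{H}_{\vartheta}=\{x\in\Omega:\sum_{k,l=1}^{\infty}|kl\,\Delta x_{kl}|<\infty\}\cap\mathcal{C}_{\vartheta 0}$. $\mathcal{L}_u=\{x\in\Omega:\sum_{k,l}|x_{kl}|<\infty\}$, and $\int\mathcal{L}_u=\{x\in\Omega:(kl\,x_{kl})_{k,l}\in\mathcal{L}_u\}$. *)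

theory Defs
  imports "HOL-Analysis.Analysis"
begin

(* Double sequences x = (x_kl)_{k,l>=1}, represented as nat => nat => complex;
   only the values at indices k,l >= 1 are ever inspected. *)
type_synonym dseq = "nat \<Rightarrow> nat \<Rightarrow> complex"

datatype conv_mode = Pconv | BPconv | Rconv

definition pconv_to :: "dseq \<Rightarrow> complex \<Rightarrow> bool" where
  "pconv_to x L \<longleftrightarrow> (\<forall>\<epsilon>>0. \<exists>N\<ge>1. \<forall>k\<ge>N. \<forall>l\<ge>N. norm (x k l - L) < \<epsilon>)"

definition dbounded :: "dseq \<Rightarrow> bool" where
  "dbounded x \<longleftrightarrow> (\<exists>B. \<forall>k\<ge>1. \<forall>l\<ge>1. norm (x k l) \<le> B)"

definition conv_to :: "conv_mode \<Rightarrow> dseq \<Rightarrow> complex \<Rightarrow> bool" where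
  "conv_to m x L = (case m of
      Pconv \<Rightarrow> pconv_to x L
    | BPconv \<Rightarrow> dbounded x \<and> pconv_to x L
    | Rconv \<Rightarrow> pconv_to x L \<and> (\<forall>k\<ge>1. convergent (\<lambda>l. x k l))
                           \<and> (\<forall>l\<ge>1. convergent (\<lambda>k. x k l)))"

definition C0 :: "conv_mode \<Rightarrow> dseq set" where
  "C0 m = {x. conv_to m x 0}"

definition Delta :: "dseq \<Rightarrow> nat \<Rightarrow> nat \<Rightarrow> complex" where
  "Delta x k l = x k l - x (Suc k) l - x k (Suc l) + x (Suc k) (Suc l)"

definition Lu :: "dseq set" where
  "Lu = {x. (\<lambda>(k,l). norm (x k l)) summable_on ({1..} \<times> {1..})}"

definition intLu :: "dseq set" where
  "intLu = {x. (\<lambda>k l. of_nat (k * l) * x k l) \<in> Lu}"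

definition Hspace :: "conv_mode \<Rightarrow> dseq set" where
  "Hspace m = {x. (\<lambda>(k,l). norm (of_nat (k * l) * Delta x k l)) summable_on ({1..} \<times> {1..})}
               \<inter> C0 m"

end

theory Submission
  imports Defs
begin

abbreviation "AA \<equiv> ({1..} \<times> {1..} :: (nat \<times> nat) set)"

lemma reidx:
  fixes g :: "nat \<times> nat \<Rightarrow> real"
  assumes "g summable_on AA" "inj_on h AA" "h ` AA \<subseteq> AA"
  shows "(\<lambda>p. g (h p)) summable_on AA"
proof -
  have "g summable_on (h ` AA)" using summable_on_subset[OF assms(1) assms(3)] .
  then have "(g \<circ> h) summable_on AA" using summable_on_reindex[OF assms(2)] by blast
  then show ?thesis by (simp add: o_def)
qed

lemma term_le:
  fixes g :: "nat \<times> nat \<Rightarrow> real"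
  assumes "g summable_on A" "\<And>p. p \<in> A \<Longrightarrow> g p \<ge> 0" "a \<in> A"
  shows "g a \<le> infsum g A"
  using finite_sum_le_infsum[OF assms(1), of "{a}"] assms by auto

lemma in_H:
  assumes "x \<in> intLu"
  shows "x \<in> Hspace m"
proof -
  define g where "g = (\<lambda>(k,l). norm (of_nat (k*l) * x k l))"
  have gs: "g summable_on AA" using assms by (simp add: intLu_def Lu_def g_def)
  have g0: "\<And>p. g p \<ge> 0" by (auto simp: g_def)
  have s1: "(\<lambda>p. g ((\<lambda>(k,l). (Suc k, l)) p)) summable_on AA"
    by (rule reidx[OF gs]) (auto simp: inj_on_def)
  have s2: "(\<lambda>p. g ((\<lambda>(k,l). (k, Suc l)) p)) summable_on AA"
    by (rule reidx[OF gs]) (auto simp: inj_on_def)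
  have s3: "(\<lambda>p. g ((\<lambda>(k,l). (Suc k, Suc l)) p)) summable_on AA"
    by (rule reidx[OF gs]) (auto simp: inj_on_def)
  have ssum: "(\<lambda>p. g p + g ((\<lambda>(k,l). (Suc k, l)) p) + g ((\<lambda>(k,l). (k, Suc l)) p)
      + g ((\<lambda>(k,l). (Suc k, Suc l)) p)) summable_on AA"
    by (intro summable_on_add gs s1 s2 s3)
  have bnd: "norm (of_nat (k * l) * Delta x k l) \<le> g (k,l) + g (Suc k, l) + g (k, Suc l) + g (Suc k, Suc l)"
    for k l
  proof -
    have "norm (of_nat (k * l) * Delta x k l) =
      real (k*l) * norm (x k l - x (Suc k) l - x k (Suc l) + x (Suc k) (Suc l))"
      by (simp add: Delta_def norm_mult)
    also have "\<dots> \<le> real (k*l) * (norm (x k l) + norm (x (Suc k) l) + norm (x k (Suc l)) + norm (x (Suc k) (Suc l)))"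
      by (intro mult_left_mono) (auto intro!: order.trans[OF norm_triangle_ineq] order.trans[OF norm_triangle_ineq4] add_mono)
    also have "\<dots> \<le> g (k,l) + g (Suc k, l) + g (k, Suc l) + g (Suc k, Suc l)"
    proof -
      have a: "real (k*l) * norm (x (Suc k) l) \<le> g (Suc k, l)"
        unfolding g_def by (auto simp: norm_mult intro!: mult_right_mono)
      have b: "real (k*l) * norm (x k (Suc l)) \<le> g (k, Suc l)"
        unfolding g_def by (auto simp: norm_mult algebra_simps intro!: mult_right_mono)
      have c: "real (k*l) * norm (x (Suc k) (Suc l)) \<le> g (Suc k, Suc l)"
        unfolding g_def by (auto simp: norm_mult intro!: mult_right_mono mult_mono)
      have d: "real (k*l) * norm (x k l) = g (k, l)"
        unfolding g_def by (auto simp: norm_mult)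
      show ?thesis unfolding distrib_left using a b c d by linarith
    qed
    finally show ?thesis .
  qed
  define F where "F = (\<lambda>p. g p + g ((\<lambda>(k,l). (Suc k, l)) p) + g ((\<lambda>(k,l). (k, Suc l)) p)
      + g ((\<lambda>(k,l). (Suc k, Suc l)) p))"
  define H where "H = (\<lambda>(k,l). norm (of_nat (k * l) * Delta x k l))"
  have Fs: "F summable_on AA" using ssum unfolding F_def .
  have HF: "H p \<le> F p" for p
  proof -
    obtain k l where p: "p = (k,l)" by (cases p)
    show ?thesis unfolding H_def F_def p case_prod_conv by (rule bnd)
  qed
  have H0: "0 \<le> H p" for p
  proof -
    obtain k l where p: "p = (k,l)" by (cases p)
    show ?thesis unfolding H_def p case_prod_conv by (rule norm_ge_zero)
  qed
  have "H summable_on AA" by (rule summable_on_comparison_test[of F AA H]) (use Fs HF H0 in auto)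
  then have hs: "(\<lambda>(k,l). norm (of_nat (k * l) * Delta x k l)) summable_on AA" unfolding H_def .
  define S where "S = infsum g AA"
  have S0: "S \<ge> 0" unfolding S_def by (rule infsum_nonneg) (rule g0)
  have xb: "norm (x k l) \<le> S / (real k * real l)" if "k \<ge> 1" "l \<ge> 1" for k l
  proof -
    have "g (k,l) \<le> S" unfolding S_def by (rule term_le[OF gs]) (use g0 that in auto)
    then have "real k * real l * norm (x k l) \<le> S" by (simp add: g_def norm_mult)
    then show ?thesis using that by (simp add: field_simps)
  qed
  have xb1: "norm (x k l) \<le> S / real k" if "k \<ge> 1" "l \<ge> 1" for k l
  proof -
    have "S / (real k * real l) \<le> S / real k"
      using that S0 by (intro divide_left_mono) auto
    then show ?thesis using xb[OF that] by linarith
  qed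
  have xb2: "norm (x k l) \<le> S / real l" if "k \<ge> 1" "l \<ge> 1" for k l
  proof -
    have "S / (real k * real l) \<le> S / real l"
      using that S0 by (intro divide_left_mono) auto
    then show ?thesis using xb[OF that] by linarith
  qed
  have pc: "pconv_to x 0"
    unfolding pconv_to_def
  proof (intro allI impI)
    fix e :: real assume e: "e > 0"
    obtain N :: nat where N: "N > S / e" using reals_Archimedean2 by blast
    have "S / e \<ge> 0" using S0 e by simp
    then have "real N > 0" using N by linarith
    then have N1: "N \<ge> 1" by simp
    have "\<forall>k\<ge>N. \<forall>l\<ge>N. norm (x k l - 0) < e"
    proof (intro allI impI)
      fix k l assume k: "k \<ge> N" and l: "l \<ge> N"
      have "norm (x k l) \<le> S / real k" using xb1 k l N1 by auto
      also have "\<dots> \<le> S / real N" using k N1 S0 by (intro divide_left_mono) auto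
      also have "\<dots> < e" using N e N1 by (simp add: field_simps)
      finally show "norm (x k l - 0) < e" by simp
    qed
    then show "\<exists>N\<ge>1. \<forall>k\<ge>N. \<forall>l\<ge>N. norm (x k l - 0) < e" using N1 by blast
  qed
  have db: "dbounded x"
    unfolding dbounded_def
  proof (intro exI allI impI)
    fix k l :: nat assume "k \<ge> 1" "l \<ge> 1"
    moreover have "S / real k \<le> S" using \<open>k \<ge> 1\<close> S0
      by (simp add: divide_le_eq mult_le_cancel_left1)
    ultimately show "norm (x k l) \<le> S" using xb1 by fastforce
  qed
  have rows: "convergent (\<lambda>l. x k l)" if "k \<ge> 1" for k
  proof -
    have "((\<lambda>l. x k l) \<longlongrightarrow> 0) sequentially"
    proof (rule Lim_null_comparison)
      show "\<forall>\<^sub>F l in sequentially. norm (x k l) \<le> S / real l"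
        using eventually_ge_at_top[of 1] by eventually_elim (use xb2 that in auto)
      show "((\<lambda>l. S / real l) \<longlongrightarrow> 0) sequentially"
        by (rule lim_const_over_n)
    qed
    then show ?thesis by (auto simp: convergent_def)
  qed
  have cols: "convergent (\<lambda>k. x k l)" if "l \<ge> 1" for l
  proof -
    have "((\<lambda>k. x k l) \<longlongrightarrow> 0) sequentially"
    proof (rule Lim_null_comparison)
      show "\<forall>\<^sub>F k in sequentially. norm (x k l) \<le> S / real k"
        using eventually_ge_at_top[of 1] by eventually_elim (use xb1 that in auto)
      show "((\<lambda>k. S / real k) \<longlongrightarrow> 0) sequentially"
        by (rule lim_const_over_n)
    qed
    then show ?thesis by (auto simp: convergent_def)
  qed
  have "x \<in> C0 m" unfolding C0_def conv_to_def
    using pc db rows cols by (cases m) auto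
  then show ?thesis using hs by (simp add: Hspace_def)
qed

definition wit :: dseq where "wit = (\<lambda>k l. if l = 1 then 1 else 0)"

lemma wit_H: "wit \<in> Hspace m"
proof -
  have D: "Delta wit k l = 0" for k l by (simp add: Delta_def wit_def)
  have hs: "(\<lambda>(k,l). norm (of_nat (k * l) * Delta wit k l)) summable_on AA"
  proof -
    have "(\<lambda>(k,l). norm (of_nat (k * l) * Delta wit k l)) = (\<lambda>_. 0)" by (auto simp: D)
    then show ?thesis by simp
  qed
  have pc: "pconv_to wit 0" unfolding pconv_to_def wit_def
    by (auto intro!: exI[of _ 2])
  have db: "dbounded wit" unfolding dbounded_def wit_def by (auto intro!: exI[of _ 1])
  have rows: "convergent (\<lambda>l. wit k l)" for k
  proof -
    have "((\<lambda>l. wit k l) \<longlongrightarrow> 0) sequentially"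
      by (rule tendsto_eventually) (use eventually_ge_at_top[of 2] in \<open>eventually_elim, simp add: wit_def\<close>)
    then show ?thesis by (auto simp: convergent_def)
  qed
  have cols: "convergent (\<lambda>k. wit k l)" for l
    by (simp add: wit_def convergent_const)
  have "wit \<in> C0 m" unfolding C0_def conv_to_def
    using pc db rows cols by (cases m) auto
  then show ?thesis using hs by (simp add: Hspace_def)
qed

lemma wit_not: "wit \<notin> intLu"
proof
  assume "wit \<in> intLu"
  then have gs: "(\<lambda>(k,l). norm (of_nat (k*l) * wit k l)) summable_on AA"
    by (simp add: intLu_def Lu_def)
  define g where "g = (\<lambda>(k,l). norm (of_nat (k*l) * wit k l))"
  have gs': "g summable_on AA" using gs by (simp add: g_def)
  define S where "S = infsum g AA"
  obtain n :: nat where n: "real n > S" using reals_Archimedean2 by blast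
  have fin: "finite ({1..n} \<times> {1::nat})" by simp
  have "sum g ({1..n} \<times> {1}) \<le> S" unfolding S_def
    by (rule finite_sum_le_infsum[OF gs' fin]) (auto simp: g_def)
  moreover have "sum g ({1..n} \<times> {1}) \<ge> real n"
  proof -
    have "sum g ({1..n} \<times> {1}) = (\<Sum>k\<in>{1..n}. real k)"
    proof -
      have e: "{1..n} \<times> {1} = (\<lambda>k. (k,1::nat)) ` {1..n}" by auto
      show ?thesis unfolding e by (subst sum.reindex) (auto simp: inj_on_def g_def wit_def)
    qed
    also have "\<dots> \<ge> (\<Sum>k\<in>{1..n}. 1)" by (intro sum_mono) auto
    finally show ?thesis by simp
  qed
  ultimately show False using n by linarith
qed

theorem corollary2p5:
  fixes \<theta> :: conv_mode
  shows "intLu \<subset> Hspace \<theta>"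
  using in_H wit_H wit_not by blast

end
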